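(* Let $U\in\mathscr P_{++}$ with $U^\theta\in\mathbb{SO}_+$, and let $J_t=\mathbb E[\int_t^\infty U_s^\theta ds\mid\mathcal F_t]$. Let $W$ be the unique solution associated to $(h_{EZ},U)$ for which there exist constants $0<c_1\le c_2<\infty$ with $c_1J\le W\le c_2J$ (such a solution exists). Then $W$ is the maximal solution associated to $(h_{EZ},U)$.
   Context: Work on a filtered probability space $(\Omega,\mathcal F,(\mathcal F_t)_{t\ge0},\mathbb P)$ with complete continuous filtration and trivial $\mathcal F_0$. $\mathscr P_+$ (resp. $\mathscr P_{++}$) denotes nonnegative (resp. strictly positive) progressively measurable processes. $\theta>1$ is fixed and $\rho=\frac{\theta-1}{\theta}$; $h_{EZ}(u,w)=uw^\rho$. For $U\in\mathscr P_+$, a solution associated to $(h_{EZ},U)$ is a nonnegative càdlàg progressively measurable $W$ with $\mathbb E\int_0^\infty U_sW_s^\rho ds<\infty$ and $W_t=\mathbb E[\int_t^\infty U_sW_s^\rho ds\mid\mathcal F_t]$ for all $t\ge0$; it is maximal if $W\ge W'$ for every such solution $W'$. For $X\in\mathscr P_+$, $J^X_t=\mathbb E[\int_t^\infty X_sds\mid\mathcal F_t]$; $\mathbb{SO}$ is the set of $X\in\mathscr P_{++}$ with $\mathbb E\int_0^\infty X_tdt<\infty$ and $kJ^X\le X\le KJ^X$ for constants $0<k\le K<\infty$; $\mathbb{SO}_\nu$ ($\nu\ge0$) the set of $X\in\mathbb{SO}$ with $(e^{\nu t}X_t)_{t\ge0}\in\mathbb{SO}$; $\mathbb{SO}_+=\bigcup_{\nu>0}\mathbb{SO}_\nu$.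 *)

theory Defs
  imports "HOL-Probability.Probability"
begin

text \<open>Standing assumptions: a filtered probability space (M, (F t)_{t \<ge> 0}) with a
complete, continuous (right- and left-continuous) filtration and trivial F 0.
Processes are functions real \<Rightarrow> 'a \<Rightarrow> real; only times t \<ge> 0 matter.\<close>

definition filtered_prob_space :: "'a measure \<Rightarrow> (real \<Rightarrow> 'a measure) \<Rightarrow> bool" where
  "filtered_prob_space M F \<longleftrightarrow>
     prob_space M
   \<and> (\<forall>t\<ge>0. subalgebra M (F t))
   \<and> (\<forall>s t. 0 \<le> s \<longrightarrow> s \<le> t \<longrightarrow> sets (F s) \<subseteq> sets (F t))
   \<comment> \<open>completeness: every subset of a null set belongs to F 0\<close>
   \<and> (\<forall>N\<in>null_sets M. \<forall>A. A \<subseteq> N \<longrightarrow> A \<in> sets (F 0))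
   \<comment> \<open>right-continuity\<close>
   \<and> (\<forall>t\<ge>0. sets (F t) = (\<Inter>s\<in>{t<..}. sets (F s)))
   \<comment> \<open>left-continuity\<close>
   \<and> (\<forall>t>0. sets (F t) = sigma_sets (space M) (\<Union>s\<in>{0..<t}. sets (F s)))
   \<comment> \<open>trivial F 0\<close>
   \<and> (\<forall>A\<in>sets (F 0). measure M A = 0 \<or> measure M A = 1)"

definition prog_measurable :: "'a measure \<Rightarrow> (real \<Rightarrow> 'a measure) \<Rightarrow> (real \<Rightarrow> 'a \<Rightarrow> real) \<Rightarrow> bool" where
  "prog_measurable M F X \<longleftrightarrow>
     (\<forall>t\<ge>0. (\<lambda>(s, \<omega>). X s \<omega>) \<in> (restrict_space borel {0..t} \<Otimes>\<^sub>M F t) \<rightarrow>\<^sub>M borel)"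

definition P_plus :: "'a measure \<Rightarrow> (real \<Rightarrow> 'a measure) \<Rightarrow> (real \<Rightarrow> 'a \<Rightarrow> real) \<Rightarrow> bool" where
  "P_plus M F X \<longleftrightarrow> prog_measurable M F X \<and> (\<forall>t\<ge>0. \<forall>\<omega>\<in>space M. 0 \<le> X t \<omega>)"

definition P_pplus :: "'a measure \<Rightarrow> (real \<Rightarrow> 'a measure) \<Rightarrow> (real \<Rightarrow> 'a \<Rightarrow> real) \<Rightarrow> bool" where
  "P_pplus M F X \<longleftrightarrow> prog_measurable M F X \<and> (\<forall>t\<ge>0. \<forall>\<omega>\<in>space M. 0 < X t \<omega>)"

definition cadlag :: "'a measure \<Rightarrow> (real \<Rightarrow> 'a \<Rightarrow> real) \<Rightarrow> bool" where
  "cadlag M X \<longleftrightarrow> (\<forall>\<omega>\<in>space M. \<forall>t\<ge>0.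
      continuous (at_right t) (\<lambda>s. X s \<omega>) \<and>
      (t > 0 \<longrightarrow> (\<exists>l. ((\<lambda>s. X s \<omega>) \<longlongrightarrow> l) (at_left t))))"

definition Jproc :: "'a measure \<Rightarrow> (real \<Rightarrow> 'a measure) \<Rightarrow> (real \<Rightarrow> 'a \<Rightarrow> real) \<Rightarrow> real \<Rightarrow> 'a \<Rightarrow> ennreal" where
  "Jproc M F X t = nn_cond_exp M (F t) (\<lambda>\<omega>. \<integral>\<^sup>+ s. indicator {t..} s * ennreal (X s \<omega>) \<partial>lborel)"

definition SO :: "'a measure \<Rightarrow> (real \<Rightarrow> 'a measure) \<Rightarrow> (real \<Rightarrow> 'a \<Rightarrow> real) \<Rightarrow> bool" where
  "SO M F X \<longleftrightarrow> P_pplus M F X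
     \<and> (\<integral>\<^sup>+ \<omega>. (\<integral>\<^sup>+ s. indicator {0..} s * ennreal (X s \<omega>) \<partial>lborel) \<partial>M) < \<infinity>
     \<and> (\<exists>k K. 0 < k \<and> k \<le> K \<and>
          (\<forall>t\<ge>0. AE \<omega> in M. ennreal k * Jproc M F X t \<omega> \<le> ennreal (X t \<omega>)
                             \<and> ennreal (X t \<omega>) \<le> ennreal K * Jproc M F X t \<omega>))"

definition SO_nu :: "'a measure \<Rightarrow> (real \<Rightarrow> 'a measure) \<Rightarrow> real \<Rightarrow> (real \<Rightarrow> 'a \<Rightarrow> real) \<Rightarrow> bool" where
  "SO_nu M F \<nu> X \<longleftrightarrow> SO M F X \<and> SO M F (\<lambda>t \<omega>. exp (\<nu> * t) * X t \<omega>)"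

definition SO_plus :: "'a measure \<Rightarrow> (real \<Rightarrow> 'a measure) \<Rightarrow> (real \<Rightarrow> 'a \<Rightarrow> real) \<Rightarrow> bool" where
  "SO_plus M F X \<longleftrightarrow> (\<exists>\<nu>>0. SO_nu M F \<nu> X)"

definition rho :: "real \<Rightarrow> real" where
  "rho \<theta> = (\<theta> - 1) / \<theta>"

definition h_EZ :: "real \<Rightarrow> real \<Rightarrow> real \<Rightarrow> real" where
  "h_EZ \<theta> u w = u * w powr rho \<theta>"

definition is_solution :: "'a measure \<Rightarrow> (real \<Rightarrow> 'a measure) \<Rightarrow> (real \<Rightarrow> real \<Rightarrow> real)
    \<Rightarrow> (real \<Rightarrow> 'a \<Rightarrow> real) \<Rightarrow> (real \<Rightarrow> 'a \<Rightarrow> real) \<Rightarrow> bool" where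
  "is_solution M F h U W \<longleftrightarrow> P_plus M F W \<and> cadlag M W
     \<and> (\<integral>\<^sup>+ \<omega>. (\<integral>\<^sup>+ s. indicator {0..} s * ennreal (h (U s \<omega>) (W s \<omega>)) \<partial>lborel) \<partial>M) < \<infinity>
     \<and> (\<forall>t\<ge>0. AE \<omega> in M. ennreal (W t \<omega>) =
            nn_cond_exp M (F t) (\<lambda>\<omega>. \<integral>\<^sup>+ s. indicator {t..} s * ennreal (h (U s \<omega>) (W s \<omega>)) \<partial>lborel) \<omega>)"

definition is_maximal_solution :: "'a measure \<Rightarrow> (real \<Rightarrow> 'a measure) \<Rightarrow> (real \<Rightarrow> real \<Rightarrow> real)
    \<Rightarrow> (real \<Rightarrow> 'a \<Rightarrow> real) \<Rightarrow> (real \<Rightarrow> 'a \<Rightarrow> real) \<Rightarrow> bool" where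
  "is_maximal_solution M F h U W \<longleftrightarrow> is_solution M F h U W
     \<and> (\<forall>W'. is_solution M F h U W' \<longrightarrow> (\<forall>t\<ge>0. AE \<omega> in M. W' t \<omega> \<le> W t \<omega>))"

end

theory Submission
  imports Defs
begin

definition X0 :: "(real \<Rightarrow> 'a \<Rightarrow> real) \<Rightarrow> real \<Rightarrow> 'a \<Rightarrow> real" where
  "X0 X s \<omega> = (if 0 \<le> s then X s \<omega> else 0)"

lemma measurable_target_sub:
  assumes "f \<in> A \<rightarrow>\<^sub>M B" "sets B' \<subseteq> sets B" "space B' = space B"
  shows "f \<in> A \<rightarrow>\<^sub>M B'"
  using assms unfolding measurable_def by auto

lemma young_EZ:
  fixes \<theta> u w B :: real
  assumes th: "\<theta> > 1" and u: "0 \<le> u" and w: "0 \<le> w" and B: "0 < B"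
  shows "u * w powr rho \<theta> \<le> (1/\<theta>) * B powr (-(\<theta>-1)) * u powr \<theta> + rho \<theta> * B * w"
proof (cases "u = 0 \<or> w = 0")
  case True
  have "0 \<le> (1/\<theta>) * B powr (-(\<theta>-1)) * u powr \<theta> + rho \<theta> * B * w"
    using th u w B by (intro add_nonneg_nonneg mult_nonneg_nonneg) (auto simp: rho_def)
  then show ?thesis using True by auto
next
  case False
  then have u': "0 < u" and w': "0 < w" using u w by auto
  have r: "rho \<theta> = 1 - 1/\<theta>" using th by (simp add: rho_def field_simps)
  have Y: "(B powr (-(\<theta>-1)) * u powr \<theta>) powr (1/\<theta>) * (B*w) powr (rho \<theta>)
       \<le> (1/\<theta>) * (B powr (-(\<theta>-1)) * u powr \<theta>) + rho \<theta> * (B*w)"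
    by (rule Youngs_inequality_0) (use th u' w' B r in auto)
  have "(B powr (-(\<theta>-1)) * u powr \<theta>) powr (1/\<theta>) = B powr (-(\<theta>-1) * (1/\<theta>)) * u powr (\<theta> * (1/\<theta>))"
    using B u' by (simp add: powr_mult powr_powr)
  also have "\<dots> = B powr (- rho \<theta>) * u"
  proof -
    have e1: "-(\<theta>-1) * (1/\<theta>) = - rho \<theta>" using th by (auto simp: rho_def field_simps)
    have e2: "\<theta> * (1/\<theta>) = 1" using th by auto
    show ?thesis unfolding e1 e2 using u' by simp
  qed
  finally have 1: "(B powr (-(\<theta>-1)) * u powr \<theta>) powr (1/\<theta>) = B powr (- rho \<theta>) * u" .
  have 2: "(B*w) powr (rho \<theta>) = B powr rho \<theta> * w powr rho \<theta>"
    using B w' by (simp add: powr_mult)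
  have 3: "B powr (- rho \<theta>) * B powr rho \<theta> = 1"
    using B by (simp add: powr_add[symmetric])
  have "u * w powr rho \<theta> = (B powr (-(\<theta>-1)) * u powr \<theta>) powr (1/\<theta>) * (B*w) powr (rho \<theta>)"
    unfolding 1 2 using 3 by (simp add: algebra_simps)
  also note Y
  finally show ?thesis by (simp add: algebra_simps)
qed

lemma exp_int:
  fixes \<nu> t :: real
  assumes nu: "0 < \<nu>"
  shows "(\<integral>\<^sup>+s. indicator {t..} s * ennreal (exp (\<nu> * (t - s))) \<partial>lborel) = ennreal (1/\<nu>)"
proof -
  have "(\<integral>\<^sup>+s. indicator {t..} s * ennreal (exp (\<nu> * (t - s))) \<partial>lborel)
      = ennreal \<bar>1/\<nu>\<bar> * (\<integral>\<^sup>+x. indicator {t..} (t + (1/\<nu>) * x) * ennreal (exp (\<nu> * (t - (t + (1/\<nu>) * x)))) \<partial>lborel)"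
    by (rule nn_integral_real_affine) (use nu in auto)
  also have "(\<integral>\<^sup>+x. indicator {t..} (t + (1/\<nu>) * x) * ennreal (exp (\<nu> * (t - (t + (1/\<nu>) * x)))) \<partial>lborel)
      = (\<integral>\<^sup>+x. ennreal (x^0 * exp (-x)) * indicator {0 ..} x \<partial>lborel)"
    using nu by (intro nn_integral_cong) (auto split: split_indicator simp: field_simps)
  also have "\<dots> = 1"
    using nn_intergal_power_times_exp_Ici[of 0] by simp
  finally show ?thesis using nu by simp
qed

lemma half_lemma:
  fixes X a :: ennreal
  assumes fin: "X < \<infinity>" and le: "X \<le> a + X * ennreal (1/2)"
  shows "X \<le> ennreal 2 * a"
proof (cases "a = \<top>")
  case True then show ?thesis by (simp add: ennreal_mult_top)
next
  case False
  obtain x where x: "0 \<le> x" "X = ennreal x" using fin less_top_ennreal by auto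
  obtain y where y: "0 \<le> y" "a = ennreal y" using False less_top_ennreal top.not_eq_extremum by auto
  have h: "ennreal (x * (1/2)) = ennreal x * ennreal (1/2)" by (rule ennreal_mult) (use x in auto)
  have e: "ennreal (y + x*(1/2)) = ennreal y + ennreal x * ennreal (1/2)"
    unfolding h[symmetric] by (rule ennreal_plus) (use x y in auto)
  have "ennreal x \<le> ennreal (y + x * (1/2))"
    using le unfolding x(2) y(2) e[symmetric] .
  then have "x \<le> y + x * (1/2)" using x y by (subst (asm) ennreal_le_iff) auto
  then have "x \<le> 2 * y" by simp
  then have "x \<le> 2 * y" by simp
  then have "ennreal x \<le> ennreal (2 * y)" by (rule ennreal_leI)
  also have "ennreal (2 * y) = ennreal 2 * ennreal y" by (rule ennreal_mult) (use y in auto)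
  finally show ?thesis using x y by simp
qed


lemma chain_ineq:
  fixes jn j :: ennreal and k2 e K1 u :: real
  assumes k2: "0 < k2" and e: "0 \<le> e" and K1: "0 \<le> K1" and u: "0 \<le> u"
    and h1: "ennreal k2 * jn \<le> ennreal (e * u)" and h2: "ennreal u \<le> ennreal K1 * j"
  shows "jn \<le> ennreal (e * K1 / k2) * j"
proof -
  have one: "ennreal (1/k2) * ennreal k2 = 1"
    using k2 by (simp add: ennreal_mult[symmetric])
  have "jn = ennreal (1/k2) * (ennreal k2 * jn)" using one by (simp add: mult.assoc[symmetric])
  also have "\<dots> \<le> ennreal (1/k2) * ennreal (e * u)" by (intro mult_left_mono h1) auto
  also have "\<dots> = ennreal (e / k2) * ennreal u"
    using k2 e u by (simp add: ennreal_mult[symmetric])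
  also have "\<dots> \<le> ennreal (e / k2) * (ennreal K1 * j)" by (intro mult_left_mono h2) auto
  also have "\<dots> = ennreal (e * K1 / k2) * j"
    using k2 e K1 by (simp add: ennreal_mult[symmetric] mult.assoc[symmetric])
  finally show ?thesis .
qed

locale fps =
  fixes M :: "'a measure" and F :: "real \<Rightarrow> 'a measure"
  assumes fps: "filtered_prob_space M F"
begin

lemma prob: "prob_space M" using fps[unfolded filtered_prob_space_def, THEN conjunct1] .

sublocale prob_space M by (rule prob)

lemma subalg: "0 \<le> t \<Longrightarrow> subalgebra M (F t)"
  using fps[unfolded filtered_prob_space_def, THEN conjunct2, THEN conjunct1] by simp

lemma mono_F: "0 \<le> s \<Longrightarrow> s \<le> t \<Longrightarrow> sets (F s) \<subseteq> sets (F t)"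
  using fps[unfolded filtered_prob_space_def, THEN conjunct2, THEN conjunct2, THEN conjunct1] by simp

lemma sfs: "0 \<le> t \<Longrightarrow> sigma_finite_subalgebra M (F t)"
proof -
  assume a: "0 \<le> t"
  have "finite_measure_subalgebra M (F t)"
    unfolding finite_measure_subalgebra_def finite_measure_subalgebra_axioms_def
    using subalg[OF a] finite_measure_axioms by blast
  then show ?thesis by (rule finite_measure_subalgebra_is_sigma_finite)
qed

lemma space_F: "0 \<le> t \<Longrightarrow> space (F t) = space M"
  using subalg unfolding subalgebra_def by auto

lemma sets_F: "0 \<le> t \<Longrightarrow> sets (F t) \<subseteq> sets M"
  using subalg unfolding subalgebra_def by auto

lemma slice_meas:
  assumes "prog_measurable M F X" "0 \<le> t"
  shows "X t \<in> borel_measurable (F t)"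
proof -
  have 1: "(\<lambda>(s, \<omega>). X s \<omega>) \<in> (restrict_space borel {0..t} \<Otimes>\<^sub>M F t) \<rightarrow>\<^sub>M borel"
    using assms unfolding prog_measurable_def by auto
  have 2: "(\<lambda>\<omega>. (t, \<omega>)) \<in> F t \<rightarrow>\<^sub>M (restrict_space borel {0..t} \<Otimes>\<^sub>M F t)"
    using assms(2) by (intro measurable_Pair measurable_const measurable_ident_sets) (auto simp: space_restrict_space)
  have "(\<lambda>\<omega>. (\<lambda>(s, \<omega>). X s \<omega>) (t, \<omega>)) \<in> borel_measurable (F t)"
    using measurable_comp[OF 2 1] by (simp add: comp_def)
  then show ?thesis by simp
qed

lemma slice_meas_M:
  assumes "prog_measurable M F X" "0 \<le> t"
  shows "X t \<in> borel_measurable M"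
  using measurable_from_subalg[OF subalg[OF assms(2)] slice_meas[OF assms]] .

lemma X0_meas_borel:
  assumes "prog_measurable M F X"
  shows "(\<lambda>p. X0 X (fst p) (snd p)) \<in> borel_measurable (borel \<Otimes>\<^sub>M M)"
proof (rule measurable_piecewise_restrict2[where A="\<lambda>n. {..real n} \<times> space M"])
  fix n :: nat
  show "{..real n} \<times> space M \<in> sets (borel \<Otimes>\<^sub>M M)" by (intro pair_measureI) auto
  define c where "c = (\<lambda>s::real. max 0 (min s (real n)))"
  have c1: "c \<in> borel \<rightarrow>\<^sub>M restrict_space borel {0..real n}"
    unfolding c_def by (intro measurable_restrict_space2) auto
  have sub: "sets (F (real n)) \<subseteq> sets M" "space (F (real n)) = space M"
    using sets_F space_F by auto
  have c2: "(\<lambda>p. (c (fst p), snd p)) \<in> (borel \<Otimes>\<^sub>M M) \<rightarrow>\<^sub>M (restrict_space borel {0..real n} \<Otimes>\<^sub>M F (real n))"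
    apply (intro measurable_Pair)
     apply (rule measurable_compose[OF measurable_fst c1])
    apply (rule measurable_target_sub[OF measurable_snd sub])
    done
  have 1: "(\<lambda>(s, \<omega>). X s \<omega>) \<in> (restrict_space borel {0..real n} \<Otimes>\<^sub>M F (real n)) \<rightarrow>\<^sub>M borel"
    using assms unfolding prog_measurable_def by auto
  have h: "(\<lambda>p. X (c (fst p)) (snd p)) \<in> borel_measurable (borel \<Otimes>\<^sub>M M)"
    using measurable_comp[OF c2 1] by (simp add: comp_def)
  have h2: "(\<lambda>p. if 0 \<le> fst p then X (c (fst p)) (snd p) else 0) \<in> borel_measurable (borel \<Otimes>\<^sub>M M)"
    apply (rule measurable_If[OF h])
     apply (rule measurable_const) apply simp
    apply measurable done
  show "\<exists>h\<in>borel_measurable (borel \<Otimes>\<^sub>M M). \<forall>x\<in>{..real n} \<times> space M. X0 X (fst x) (snd x) = h x"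
    by (intro bexI[OF _ h2]) (auto simp: X0_def c_def)
next
  show "space (borel \<Otimes>\<^sub>M M) = (\<Union>n. {..real n} \<times> space M)"
    using real_arch_simple by (fastforce simp: space_pair_measure)
qed

lemma X0_meas1:
  assumes "prog_measurable M F X"
  shows "(\<lambda>p. X0 X (fst p) (snd p)) \<in> borel_measurable (lborel \<Otimes>\<^sub>M M)"
proof -
  have "sets (borel \<Otimes>\<^sub>M M) = sets (lborel \<Otimes>\<^sub>M M)"
    by (intro sets_pair_measure_cong) auto
  then show ?thesis using X0_meas_borel[OF assms] measurable_cong_sets by blast
qed

lemma X0_meas2:
  assumes "prog_measurable M F X"
  shows "(\<lambda>p. X0 X (snd p) (fst p)) \<in> borel_measurable (M \<Otimes>\<^sub>M lborel)"
proof -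
  have "(\<lambda>p. X0 X (snd p) (fst p)) = (\<lambda>p. X0 X (fst p) (snd p)) \<circ> (\<lambda>(x,y). (y,x))"
    by (auto simp: fun_eq_iff)
  then show ?thesis using measurable_comp[OF measurable_pair_swap' X0_meas1[OF assms]] by simp
qed


lemma swap_meas:
  assumes "(\<lambda>p. f (fst p) (snd p)) \<in> borel_measurable (lborel \<Otimes>\<^sub>M M)"
  shows "(\<lambda>p. f (snd p) (fst p)) \<in> borel_measurable (M \<Otimes>\<^sub>M lborel)"
proof -
  have "(\<lambda>p. f (snd p) (fst p)) = (\<lambda>p. f (fst p) (snd p)) \<circ> (\<lambda>(x,y). (y,x))"
    by (auto simp: fun_eq_iff)
  then show ?thesis using measurable_comp[OF measurable_pair_swap' assms] by simp
qed

lemma Gmeas: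
  assumes "(\<lambda>p. indicator {t..} (fst p) * f (fst p) (snd p) :: ennreal) \<in> borel_measurable (lborel \<Otimes>\<^sub>M M)"
  shows "(\<lambda>\<omega>. \<integral>\<^sup>+s. indicator {t..} s * f s \<omega> \<partial>lborel) \<in> borel_measurable M"
proof -
  have "(\<lambda>p. indicator {t..} (snd p) * f (snd p) (fst p)) \<in> borel_measurable (M \<Otimes>\<^sub>M lborel)"
    using swap_meas[of "\<lambda>s \<omega>. indicator {t..} s * f s \<omega>"] assms by simp
  then show ?thesis
    by (intro lborel.borel_measurable_nn_integral) (simp add: case_prod_beta')
qed

lemma Fub:
  assumes f: "(\<lambda>p. indicator {t..} (fst p) * f (fst p) (snd p) :: ennreal) \<in> borel_measurable (lborel \<Otimes>\<^sub>M M)"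
    and A: "A \<in> sets M"
  shows "(\<integral>\<^sup>+\<omega>\<in>A. (\<integral>\<^sup>+s. indicator {t..} s * f s \<omega> \<partial>lborel) \<partial>M)
       = (\<integral>\<^sup>+s. indicator {t..} s * (\<integral>\<^sup>+\<omega>\<in>A. f s \<omega> \<partial>M) \<partial>lborel)"
proof -
  interpret pair_sigma_finite lborel M
    by (simp add: pair_sigma_finite_def sigma_finite_lborel sigma_finite_measure_axioms)
  have m: "(\<lambda>p. indicator {t..} (fst p) * f (fst p) (snd p) * indicator A (snd p)) \<in> borel_measurable (lborel \<Otimes>\<^sub>M M)"
    using f A by measurable
  have L: "\<And>\<omega>. (\<integral>\<^sup>+s. indicator {t..} s * f s \<omega> \<partial>lborel) * indicator A \<omega> = (\<integral>\<^sup>+s. indicator {t..} s * f s \<omega> * indicator A \<omega> \<partial>lborel)"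
    by (auto split: split_indicator)
  have R: "\<And>s. indicator {t..} s * (\<integral>\<^sup>+\<omega>. f s \<omega> * indicator A \<omega> \<partial>M) = (\<integral>\<^sup>+\<omega>. indicator {t..} s * f s \<omega> * indicator A \<omega> \<partial>M)"
    by (auto split: split_indicator)
  have "(\<integral>\<^sup>+\<omega>. (\<integral>\<^sup>+s. indicator {t..} s * f s \<omega> * indicator A \<omega> \<partial>lborel) \<partial>M)
      = (\<integral>\<^sup>+s. (\<integral>\<^sup>+\<omega>. indicator {t..} s * f s \<omega> * indicator A \<omega> \<partial>M) \<partial>lborel)"
    by (rule Fubini') (use m in \<open>simp add: case_prod_beta'\<close>)
  then show ?thesis by (simp add: L R)
qed

lemma Fub2:
  assumes f: "(\<lambda>p. indicator {t..} (fst p) * f (fst p) (snd p) :: ennreal) \<in> borel_measurable (lborel \<Otimes>\<^sub>M M)"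
    and A: "A \<in> sets M"
  shows "(\<lambda>s. indicator {t..} s * (\<integral>\<^sup>+\<omega>\<in>A. f s \<omega> \<partial>M)) \<in> borel_measurable lborel"
proof -
  have m: "(\<lambda>p. indicator {t..} (fst p) * f (fst p) (snd p) * indicator A (snd p)) \<in> borel_measurable (lborel \<Otimes>\<^sub>M M)"
    using f A by measurable
  have R: "(\<lambda>s. indicator {t..} s * (\<integral>\<^sup>+\<omega>. f s \<omega> * indicator A \<omega> \<partial>M)) = (\<lambda>s. \<integral>\<^sup>+\<omega>. indicator {t..} s * f s \<omega> * indicator A \<omega> \<partial>M)"
    by (auto simp: fun_eq_iff split: split_indicator)
  show ?thesis unfolding R
    by (rule borel_measurable_nn_integral) (use m in \<open>simp add: case_prod_beta'\<close>)
qed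

lemma int_le_AE:
  assumes sub: "subalgebra M N" and fN: "f \<in> borel_measurable N" and gN: "g \<in> borel_measurable N"
    and fin: "(\<integral>\<^sup>+x. f x \<partial>M) < \<infinity>"
    and le: "\<And>A. A \<in> sets N \<Longrightarrow> (\<integral>\<^sup>+x\<in>A. f x \<partial>M) \<le> (\<integral>\<^sup>+x\<in>A. g x \<partial>M)"
  shows "AE x in M. f x \<le> g x"
proof -
  have [measurable]: "f \<in> borel_measurable M" "g \<in> borel_measurable M"
    using measurable_from_subalg[OF sub] fN gN by auto
  define B where "B = {x\<in>space N. g x < f x}"
  have BN: "B \<in> sets N" unfolding B_def using fN gN by measurable
  have sp: "space N = space M" using sub by (auto simp: subalgebra_def)
  have BM[measurable]: "B \<in> sets M" using BN sub by (auto simp: subalgebra_def)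
  have 1: "(\<integral>\<^sup>+x\<in>B. f x \<partial>M) \<le> (\<integral>\<^sup>+x\<in>B. g x \<partial>M)" using le BN by auto
  have "(\<integral>\<^sup>+x\<in>B. f x \<partial>M) \<le> (\<integral>\<^sup>+x. f x \<partial>M)"
    by (intro nn_integral_mono) (auto split: split_indicator)
  then have 2: "(\<integral>\<^sup>+x\<in>B. f x \<partial>M) < \<infinity>" using fin by auto
  have "(\<integral>\<^sup>+x\<in>B. f x \<partial>M) = (\<integral>\<^sup>+x. g x * indicator B x + (f x - g x) * indicator B x \<partial>M)"
    by (intro nn_integral_cong) (auto simp: B_def sp add_diff_inverse_ennreal less_imp_le split: split_indicator)
  also have "\<dots> = (\<integral>\<^sup>+x\<in>B. g x \<partial>M) + (\<integral>\<^sup>+x\<in>B. (f x - g x) \<partial>M)"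
    by (intro nn_integral_add) auto
  finally have 3: "(\<integral>\<^sup>+x\<in>B. f x \<partial>M) = (\<integral>\<^sup>+x\<in>B. g x \<partial>M) + (\<integral>\<^sup>+x\<in>B. (f x - g x) \<partial>M)" .
  have gfin: "(\<integral>\<^sup>+x\<in>B. g x \<partial>M) < \<infinity>" using 2 3 by (metis le_iff_add le_less_trans)
  have "(\<integral>\<^sup>+x\<in>B. (f x - g x) \<partial>M) = 0"
  proof -
    have "(\<integral>\<^sup>+x\<in>B. g x \<partial>M) + (\<integral>\<^sup>+x\<in>B. (f x - g x) \<partial>M) \<le> (\<integral>\<^sup>+x\<in>B. g x \<partial>M) + 0"
      using 1 3 by simp
    then show ?thesis using gfin
      by (auto simp: ennreal_add_left_cancel_le)
  qed
  then have "AE x in M. (f x - g x) * indicator B x = 0"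
    by (subst (asm) nn_integral_0_iff_AE) auto
  then show ?thesis
  proof (rule AE_mp, intro AE_I2 impI)
    fix x assume x: "x \<in> space M" and z: "(f x - g x) * indicator B x = 0"
    show "f x \<le> g x"
    proof (rule ccontr)
      assume "\<not> f x \<le> g x"
      then have "g x < f x" by auto
      then have "x \<in> B" "0 < f x - g x" using x sp by (auto simp: B_def diff_gr0_ennreal)
      then show False using z by auto
    qed
  qed
qed

lemma sol_intA:
  assumes sol: "is_solution M F h U V" and t: "0 \<le> t" and A: "A \<in> sets (F t)"
    and Gm: "(\<lambda>\<omega>. \<integral>\<^sup>+ s. indicator {t..} s * ennreal (h (U s \<omega>) (V s \<omega>)) \<partial>lborel) \<in> borel_measurable M"
  shows "(\<integral>\<^sup>+\<omega>\<in>A. ennreal (V t \<omega>) \<partial>M) = (\<integral>\<^sup>+\<omega>\<in>A. (\<integral>\<^sup>+ s. indicator {t..} s * ennreal (h (U s \<omega>) (V s \<omega>)) \<partial>lborel) \<partial>M)"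
proof -
  interpret S: sigma_finite_subalgebra M "F t" using sfs[OF t] .
  have ae: "AE \<omega> in M. ennreal (V t \<omega>) = nn_cond_exp M (F t) (\<lambda>\<omega>. \<integral>\<^sup>+ s. indicator {t..} s * ennreal (h (U s \<omega>) (V s \<omega>)) \<partial>lborel) \<omega>"
    using sol t unfolding is_solution_def by blast
  have "(\<integral>\<^sup>+\<omega>\<in>A. ennreal (V t \<omega>) \<partial>M) = (\<integral>\<^sup>+\<omega>. indicator A \<omega> * nn_cond_exp M (F t) (\<lambda>\<omega>. \<integral>\<^sup>+ s. indicator {t..} s * ennreal (h (U s \<omega>) (V s \<omega>)) \<partial>lborel) \<omega> \<partial>M)"
    by (intro nn_integral_cong_AE) (use ae in \<open>auto simp: mult.commute\<close>)
  also have "\<dots> = (\<integral>\<^sup>+\<omega>. indicator A \<omega> * (\<integral>\<^sup>+ s. indicator {t..} s * ennreal (h (U s \<omega>) (V s \<omega>)) \<partial>lborel) \<partial>M)"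
    by (rule S.nn_cond_exp_intg) (use A Gm in auto)
  finally show ?thesis by (simp add: mult.commute)
qed

lemma meas_h:
  assumes pU: "prog_measurable M F U" and pV: "prog_measurable M F V" and t: "0 \<le> t"
  shows "(\<lambda>p. indicator {t..} (fst p) * ennreal (h_EZ \<theta> (U (fst p) (snd p)) (V (fst p) (snd p)))) \<in> borel_measurable (lborel \<Otimes>\<^sub>M M)"
proof -
  have eq: "(\<lambda>p. indicator {t..} (fst p) * ennreal (h_EZ \<theta> (U (fst p) (snd p)) (V (fst p) (snd p))))
     = (\<lambda>p. indicator {t..} (fst p) * ennreal (X0 U (fst p) (snd p) * X0 V (fst p) (snd p) powr rho \<theta>))"
    using t by (auto simp: fun_eq_iff X0_def h_EZ_def split: split_indicator)
  note [measurable] = X0_meas1[OF pU] X0_meas1[OF pV]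
  show ?thesis unfolding eq by measurable
qed

lemma meas_wU:
  assumes pU: "prog_measurable M F U" and t: "0 \<le> t"
  shows "(\<lambda>p. indicator {t..} (fst p) * ennreal (exp (c * fst p) * U (fst p) (snd p) powr \<theta>)) \<in> borel_measurable (lborel \<Otimes>\<^sub>M M)"
proof -
  have eq: "(\<lambda>p. indicator {t..} (fst p) * ennreal (exp (c * fst p) * U (fst p) (snd p) powr \<theta>))
     = (\<lambda>p. indicator {t..} (fst p) * ennreal (exp (c * fst p) * X0 U (fst p) (snd p) powr \<theta>))"
    using t by (auto simp: fun_eq_iff X0_def split: split_indicator)
  note [measurable] = X0_meas1[OF pU]
  show ?thesis unfolding eq by measurable
qed

lemma meas_U:
  assumes pU: "prog_measurable M F U" and t: "0 \<le> t"
  shows "(\<lambda>p. indicator {t..} (fst p) * ennreal (U (fst p) (snd p) powr \<theta>)) \<in> borel_measurable (lborel \<Otimes>\<^sub>M M)"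
  using meas_wU[OF pU t, of 0 \<theta>] by simp

lemma iter_step:
  assumes th: "\<theta> > 1" and PU: "P_pplus M F U"
    and sV: "is_solution M F (h_EZ \<theta>) U V" and sW: "is_solution M F (h_EZ \<theta>) U W"
    and mu: "0 \<le> \<mu>" and le: "\<forall>s\<ge>0. AE \<omega> in M. V s \<omega> \<le> \<mu> * W s \<omega>" and t: "0 \<le> t"
  shows "AE \<omega> in M. V t \<omega> \<le> \<mu> powr rho \<theta> * W t \<omega>"
proof -
  have \<rho>: "0 < rho \<theta>" using th by (simp add: rho_def)
  have pU: "prog_measurable M F U" and Upos: "\<forall>s\<ge>0. \<forall>\<omega>\<in>space M. 0 < U s \<omega>"
    using PU by (auto simp: P_pplus_def)
  have pV: "prog_measurable M F V" and Vnn: "\<forall>s\<ge>0. \<forall>\<omega>\<in>space M. 0 \<le> V s \<omega>"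
    using sV by (auto simp: is_solution_def P_plus_def)
  have pW: "prog_measurable M F W" and Wnn: "\<forall>s\<ge>0. \<forall>\<omega>\<in>space M. 0 \<le> W s \<omega>"
    using sW by (auto simp: is_solution_def P_plus_def)
  let ?gV = "\<lambda>s \<omega>. ennreal (h_EZ \<theta> (U s \<omega>) (V s \<omega>))"
  let ?gW = "\<lambda>s \<omega>. ennreal (h_EZ \<theta> (U s \<omega>) (W s \<omega>))"
  have mV: "(\<lambda>p. indicator {t..} (fst p) * ?gV (fst p) (snd p)) \<in> borel_measurable (lborel \<Otimes>\<^sub>M M)"
    by (rule meas_h[OF pU pV t])
  have mW: "(\<lambda>p. indicator {t..} (fst p) * ?gW (fst p) (snd p)) \<in> borel_measurable (lborel \<Otimes>\<^sub>M M)"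
    by (rule meas_h[OF pU pW t])
  have GmV: "(\<lambda>\<omega>. \<integral>\<^sup>+s. indicator {t..} s * ?gV s \<omega> \<partial>lborel) \<in> borel_measurable M"
    by (rule Gmeas[OF mV])
  have GmW: "(\<lambda>\<omega>. \<integral>\<^sup>+s. indicator {t..} s * ?gW s \<omega> \<partial>lborel) \<in> borel_measurable M"
    by (rule Gmeas[OF mW])
  have Wt[measurable]: "W t \<in> borel_measurable M" by (rule slice_meas_M[OF pW t])
  have key: "(\<integral>\<^sup>+\<omega>\<in>A. ennreal (V t \<omega>) \<partial>M) \<le> (\<integral>\<^sup>+\<omega>\<in>A. ennreal (\<mu> powr rho \<theta>) * ennreal (W t \<omega>) \<partial>M)"
    if A: "A \<in> sets (F t)" for A
  proof -
    have AM[measurable]: "A \<in> sets M" using A sets_F t by auto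
    have "(\<integral>\<^sup>+\<omega>\<in>A. ennreal (V t \<omega>) \<partial>M) = (\<integral>\<^sup>+s. indicator {t..} s * (\<integral>\<^sup>+\<omega>\<in>A. ?gV s \<omega> \<partial>M) \<partial>lborel)"
      using sol_intA[OF sV t A GmV] Fub[OF mV AM] by simp
    also have "\<dots> \<le> (\<integral>\<^sup>+s. indicator {t..} s * (ennreal (\<mu> powr rho \<theta>) * (\<integral>\<^sup>+\<omega>\<in>A. ?gW s \<omega> \<partial>M)) \<partial>lborel)"
    proof (intro nn_integral_mono)
      fix s
      show "indicator {t..} s * (\<integral>\<^sup>+\<omega>\<in>A. ?gV s \<omega> \<partial>M) \<le> indicator {t..} s * (ennreal (\<mu> powr rho \<theta>) * (\<integral>\<^sup>+\<omega>\<in>A. ?gW s \<omega> \<partial>M))"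
      proof (cases "t \<le> s")
        case True
        then have s0: "0 \<le> s" using t by simp
        have [measurable]: "U s \<in> borel_measurable M" "W s \<in> borel_measurable M"
          using slice_meas_M[OF pU s0] slice_meas_M[OF pW s0] by auto
        have "(\<integral>\<^sup>+\<omega>\<in>A. ?gV s \<omega> \<partial>M) \<le> (\<integral>\<^sup>+\<omega>. ennreal (\<mu> powr rho \<theta>) * (?gW s \<omega> * indicator A \<omega>) \<partial>M)"
        proof (intro nn_integral_mono_AE)
          from le s0 have "AE \<omega> in M. V s \<omega> \<le> \<mu> * W s \<omega>" by blast
          then show "AE \<omega> in M. ?gV s \<omega> * indicator A \<omega> \<le> ennreal (\<mu> powr rho \<theta>) * (?gW s \<omega> * indicator A \<omega>)"
          proof (rule AE_mp, intro AE_I2 impI)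
            fix \<omega> assume \<omega>: "\<omega> \<in> space M" and v: "V s \<omega> \<le> \<mu> * W s \<omega>"
            have u0: "0 < U s \<omega>" "0 \<le> V s \<omega>" "0 \<le> W s \<omega>" using Upos Vnn Wnn s0 \<omega> by auto
            have "V s \<omega> powr rho \<theta> \<le> (\<mu> * W s \<omega>) powr rho \<theta>"
              using v u0 \<rho> by (intro powr_mono2) auto
            also have "\<dots> = \<mu> powr rho \<theta> * W s \<omega> powr rho \<theta>"
              using mu u0 by (simp add: powr_mult)
            finally have "h_EZ \<theta> (U s \<omega>) (V s \<omega>) \<le> \<mu> powr rho \<theta> * h_EZ \<theta> (U s \<omega>) (W s \<omega>)"
              using u0 by (simp add: h_EZ_def mult_left_mono mult.left_commute)
            then have "?gV s \<omega> \<le> ennreal (\<mu> powr rho \<theta>) * ?gW s \<omega>"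
              by (subst ennreal_mult'[symmetric]) (simp_all add: ennreal_leI)
            then show "?gV s \<omega> * indicator A \<omega> \<le> ennreal (\<mu> powr rho \<theta>) * (?gW s \<omega> * indicator A \<omega>)"
              by (auto split: split_indicator)
          qed
        qed
        also have "\<dots> = ennreal (\<mu> powr rho \<theta>) * (\<integral>\<^sup>+\<omega>\<in>A. ?gW s \<omega> \<partial>M)"
          by (rule nn_integral_cmult) (simp add: h_EZ_def)
        finally show ?thesis using True by simp
      next
        case False then show ?thesis by simp
      qed
    qed
    also have "\<dots> = ennreal (\<mu> powr rho \<theta>) * (\<integral>\<^sup>+s. indicator {t..} s * (\<integral>\<^sup>+\<omega>\<in>A. ?gW s \<omega> \<partial>M) \<partial>lborel)"
      using Fub2[OF mW AM]
      by (subst nn_integral_cmult[symmetric]) (auto simp: ac_simps)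
    also have "\<dots> = ennreal (\<mu> powr rho \<theta>) * (\<integral>\<^sup>+\<omega>\<in>A. ennreal (W t \<omega>) \<partial>M)"
      using sol_intA[OF sW t A GmW] Fub[OF mW AM] by simp
    also have "\<dots> = (\<integral>\<^sup>+\<omega>\<in>A. ennreal (\<mu> powr rho \<theta>) * ennreal (W t \<omega>) \<partial>M)"
      by (subst nn_integral_cmult[symmetric]) (auto simp: ac_simps)
    finally show ?thesis .
  qed
  have fin: "(\<integral>\<^sup>+\<omega>. ennreal (V t \<omega>) \<partial>M) < \<infinity>"
  proof -
    have sp: "space M \<in> sets (F t)" using sets.top[of "F t"] space_F[OF t] by simp
    have "(\<integral>\<^sup>+\<omega>. ennreal (V t \<omega>) \<partial>M) = (\<integral>\<^sup>+\<omega>\<in>space M. ennreal (V t \<omega>) \<partial>M)"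
      by (intro nn_integral_cong) auto
    also have "\<dots> = (\<integral>\<^sup>+\<omega>\<in>space M. (\<integral>\<^sup>+s. indicator {t..} s * ?gV s \<omega> \<partial>lborel) \<partial>M)"
      by (rule sol_intA[OF sV t sp GmV])
    also have "\<dots> \<le> (\<integral>\<^sup>+\<omega>. (\<integral>\<^sup>+s. indicator {0..} s * ?gV s \<omega> \<partial>lborel) \<partial>M)"
      using t by (intro nn_integral_mono) (auto split: split_indicator intro!: nn_integral_mono)
    also have "\<dots> < \<infinity>" using sV unfolding is_solution_def by blast
    finally show ?thesis .
  qed
  have [measurable]: "V t \<in> borel_measurable (F t)" "W t \<in> borel_measurable (F t)"
    using slice_meas[OF pV t] slice_meas[OF pW t] by auto
  have "AE \<omega> in M. ennreal (V t \<omega>) \<le> ennreal (\<mu> powr rho \<theta>) * ennreal (W t \<omega>)"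
    by (rule int_le_AE[OF subalg[OF t]]) (use key fin in auto)
  then show ?thesis
  proof (rule AE_mp, intro AE_I2 impI)
    fix \<omega> assume \<omega>: "\<omega> \<in> space M" and h: "ennreal (V t \<omega>) \<le> ennreal (\<mu> powr rho \<theta>) * ennreal (W t \<omega>)"
    have "0 \<le> W t \<omega>" using Wnn t \<omega> by auto
    then show "V t \<omega> \<le> \<mu> powr rho \<theta> * W t \<omega>"
      using h by (simp add: ennreal_mult[symmetric])
  qed
qed

lemma sol_fin:
  assumes pU: "prog_measurable M F U" and sV: "is_solution M F (h_EZ \<theta>) U V" and t: "0 \<le> t"
  shows "(\<integral>\<^sup>+\<omega>. ennreal (V t \<omega>) \<partial>M) < \<infinity>"
proof -
  have pV: "prog_measurable M F V" using sV by (auto simp: is_solution_def P_plus_def)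
  let ?gV = "\<lambda>s \<omega>. ennreal (h_EZ \<theta> (U s \<omega>) (V s \<omega>))"
  have GmV: "(\<lambda>\<omega>. \<integral>\<^sup>+s. indicator {t..} s * ?gV s \<omega> \<partial>lborel) \<in> borel_measurable M"
    by (rule Gmeas[OF meas_h[OF pU pV t]])
  have sp: "space M \<in> sets (F t)" using sets.top[of "F t"] space_F[OF t] by simp
  have "(\<integral>\<^sup>+\<omega>. ennreal (V t \<omega>) \<partial>M) = (\<integral>\<^sup>+\<omega>\<in>space M. ennreal (V t \<omega>) \<partial>M)"
    by (intro nn_integral_cong) auto
  also have "\<dots> = (\<integral>\<^sup>+\<omega>\<in>space M. (\<integral>\<^sup>+s. indicator {t..} s * ?gV s \<omega> \<partial>lborel) \<partial>M)"
    by (rule sol_intA[OF sV t sp GmV])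
  also have "\<dots> \<le> (\<integral>\<^sup>+\<omega>. (\<integral>\<^sup>+s. indicator {0..} s * ?gV s \<omega> \<partial>lborel) \<partial>M)"
    using t by (intro nn_integral_mono) (auto split: split_indicator intro!: nn_integral_mono)
  also have "\<dots> < \<infinity>" using sV unfolding is_solution_def by blast
  finally show ?thesis .
qed

lemma boundA:
  assumes th: "\<theta> > 1" and PU: "P_pplus M F U" and nu: "0 < \<nu>0"
    and SO1: "SO M F (\<lambda>t \<omega>. U t \<omega> powr \<theta>)"
    and SO2: "SO M F (\<lambda>t \<omega>. exp (\<nu>0 * t) * U t \<omega> powr \<theta>)"
    and sV: "is_solution M F (h_EZ \<theta>) U V"
  shows "\<exists>C>0. \<forall>t\<ge>0. AE \<omega> in M. ennreal (V t \<omega>) \<le> ennreal C * Jproc M F (\<lambda>s \<omega>. U s \<omega> powr \<theta>) t \<omega>"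
proof -
  have \<rho>: "0 < rho \<theta>" using th by (simp add: rho_def)
  have pU: "prog_measurable M F U" and Upos: "\<forall>s\<ge>0. \<forall>\<omega>\<in>space M. 0 < U s \<omega>"
    using PU by (auto simp: P_pplus_def)
  have pV: "prog_measurable M F V" and Vnn: "\<forall>s\<ge>0. \<forall>\<omega>\<in>space M. 0 \<le> V s \<omega>"
    using sV by (auto simp: is_solution_def P_plus_def)
  obtain k1 K1 where k1: "0 < k1" "k1 \<le> K1" and so1: "\<forall>t\<ge>0. AE \<omega> in M.
      ennreal k1 * Jproc M F (\<lambda>t \<omega>. U t \<omega> powr \<theta>) t \<omega> \<le> ennreal (U t \<omega> powr \<theta>)
    \<and> ennreal (U t \<omega> powr \<theta>) \<le> ennreal K1 * Jproc M F (\<lambda>t \<omega>. U t \<omega> powr \<theta>) t \<omega>"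
    using SO1 unfolding SO_def by blast
  obtain k2 K2 where k2: "0 < k2" "k2 \<le> K2" and so2: "\<forall>t\<ge>0. AE \<omega> in M.
      ennreal k2 * Jproc M F (\<lambda>t \<omega>. exp (\<nu>0 * t) * U t \<omega> powr \<theta>) t \<omega> \<le> ennreal (exp (\<nu>0 * t) * U t \<omega> powr \<theta>)
    \<and> ennreal (exp (\<nu>0 * t) * U t \<omega> powr \<theta>) \<le> ennreal K2 * Jproc M F (\<lambda>t \<omega>. exp (\<nu>0 * t) * U t \<omega> powr \<theta>) t \<omega>"
    using SO2 unfolding SO_def by blast
  define \<nu> where "\<nu> = \<nu>0 / (\<theta> - 1)"
  have nupos: "0 < \<nu>" and nu0: "\<nu>0 = \<nu> * (\<theta> - 1)" using th nu by (auto simp: \<nu>_def)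
  define b0 where "b0 = \<nu> / (2 * rho \<theta>)"
  have b0: "0 < b0" using nupos \<rho> by (simp add: b0_def)
  define c0 where "c0 = (1/\<theta>) * b0 powr (-(\<theta>-1))"
  have c0: "0 < c0" using th b0 by (simp add: c0_def)
  define C where "C = 2 * (c0 * (K1 / k2))"
  have Cpos: "0 < C" using c0 k1 k2 by (simp add: C_def)
  show ?thesis
  proof (intro exI[of _ C] conjI allI impI Cpos)
    fix t :: real assume t: "0 \<le> t"
    let ?J = "Jproc M F (\<lambda>s \<omega>. U s \<omega> powr \<theta>) t"
    let ?Jn = "Jproc M F (\<lambda>t \<omega>. exp (\<nu>0 * t) * U t \<omega> powr \<theta>) t"
    let ?H = "\<lambda>\<omega>. \<integral>\<^sup>+s. indicator {t..} s * ennreal (exp (\<nu>0 * s) * U s \<omega> powr \<theta>) \<partial>lborel"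
    let ?gV = "\<lambda>s \<omega>. ennreal (h_EZ \<theta> (U s \<omega>) (V s \<omega>))"
    have mV: "\<And>t. 0 \<le> t \<Longrightarrow> (\<lambda>p. indicator {t..} (fst p) * ?gV (fst p) (snd p)) \<in> borel_measurable (lborel \<Otimes>\<^sub>M M)"
      by (rule meas_h[OF pU pV])
    have GmV: "\<And>t. 0 \<le> t \<Longrightarrow> (\<lambda>\<omega>. \<integral>\<^sup>+s. indicator {t..} s * ?gV s \<omega> \<partial>lborel) \<in> borel_measurable M"
      by (rule Gmeas[OF mV])
    have mH: "(\<lambda>p. indicator {t..} (fst p) * ennreal (exp (\<nu>0 * fst p) * U (fst p) (snd p) powr \<theta>)) \<in> borel_measurable (lborel \<Otimes>\<^sub>M M)"
      by (rule meas_wU[OF pU t])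
    have GmH: "?H \<in> borel_measurable M" by (rule Gmeas[OF mH])
    have Jm[measurable]: "?J \<in> borel_measurable (F t)" "?J \<in> borel_measurable M"
      unfolding Jproc_def by measurable
    have Ut[measurable]: "U t \<in> borel_measurable M" and Vt[measurable]: "V t \<in> borel_measurable M"
      using slice_meas_M[OF pU t] slice_meas_M[OF pV t] by auto
    have fin: "(\<integral>\<^sup>+\<omega>. ennreal (V t \<omega>) \<partial>M) < \<infinity>" by (rule sol_fin[OF pU sV t])
    have key: "(\<integral>\<^sup>+\<omega>\<in>A. ennreal (V t \<omega>) \<partial>M) \<le> (\<integral>\<^sup>+\<omega>\<in>A. ennreal C * ?J \<omega> \<partial>M)"
      if A: "A \<in> sets (F t)" for A
    proof -
      have AM[measurable]: "A \<in> sets M" using A sets_F t by auto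
      define X where "X = (\<integral>\<^sup>+\<omega>\<in>A. ennreal (V t \<omega>) \<partial>M)"
      define P where "P = (\<lambda>s. \<integral>\<^sup>+\<omega>\<in>A. ennreal (exp (\<nu>0 * s) * U s \<omega> powr \<theta>) \<partial>M)"
      define a0 where "a0 = c0 * exp (- \<nu>0 * t)"
      have a0: "0 \<le> a0" using c0 by (simp add: a0_def)
      have "X \<le> (\<integral>\<^sup>+\<omega>. ennreal (V t \<omega>) \<partial>M)"
        unfolding X_def by (intro nn_integral_mono) (auto split: split_indicator)
      then have Xfin: "X < \<infinity>" using fin by auto
      have X1: "X = (\<integral>\<^sup>+s. indicator {t..} s * (\<integral>\<^sup>+\<omega>\<in>A. ?gV s \<omega> \<partial>M) \<partial>lborel)"
        unfolding X_def using sol_intA[OF sV t A GmV[OF t]] Fub[OF mV[OF t] AM] by simp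
      have pt: "indicator {t..} s * (\<integral>\<^sup>+\<omega>\<in>A. ?gV s \<omega> \<partial>M)
          \<le> ennreal a0 * (indicator {t..} s * P s) + X * (indicator {t..} s * ennreal (rho \<theta> * b0 * exp (\<nu> * (t - s))))" for s
      proof (cases "t \<le> s")
        case False then show ?thesis by simp
      next
        case True
        then have s0: "0 \<le> s" using t by simp
        have [measurable]: "U s \<in> borel_measurable M" "V s \<in> borel_measurable M"
          using slice_meas_M[OF pU s0] slice_meas_M[OF pV s0] by auto
        define B where "B = b0 * exp (\<nu> * (t - s))"
        have Bpos: "0 < B" using b0 by (simp add: B_def)
        have ex: "exp (\<nu> * (t - s)) powr (-(\<theta>-1)) = exp (- \<nu>0 * t) * exp (\<nu>0 * s)"
          by (simp add: exp_powr_real exp_add[symmetric] nu0 algebra_simps)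
        have ex': "exp (\<nu> * (t - s)) powr (1 - \<theta>) = exp (- (\<nu>0 * t)) * exp (\<nu>0 * s)"
          by (simp add: exp_powr_real exp_add[symmetric] nu0 algebra_simps)
        have Bp: "(1/\<theta>) * B powr (-(\<theta>-1)) = a0 * exp (\<nu>0 * s)"
          using b0 unfolding B_def a0_def c0_def by (simp add: powr_mult ex ex')
        have pw: "h_EZ \<theta> (U s \<omega>) (V s \<omega>) \<le> a0 * (exp (\<nu>0 * s) * U s \<omega> powr \<theta>) + (rho \<theta> * B) * V s \<omega>"
          if \<omega>: "\<omega> \<in> space M" for \<omega>
        proof -
          have "0 < U s \<omega>" "0 \<le> V s \<omega>" using Upos Vnn s0 \<omega> by auto
          then have "U s \<omega> * V s \<omega> powr rho \<theta> \<le> (1/\<theta>) * B powr (-(\<theta>-1)) * U s \<omega> powr \<theta> + rho \<theta> * B * V s \<omega>"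
            by (intro young_EZ th Bpos) auto
          then show ?thesis unfolding h_EZ_def Bp by (simp add: mult.assoc)
        qed
        have "(\<integral>\<^sup>+\<omega>\<in>A. ?gV s \<omega> \<partial>M) \<le> (\<integral>\<^sup>+\<omega>. ennreal a0 * (ennreal (exp (\<nu>0 * s) * U s \<omega> powr \<theta>) * indicator A \<omega>)
                  + ennreal (rho \<theta> * B) * (ennreal (V s \<omega>) * indicator A \<omega>) \<partial>M)"
        proof (intro nn_integral_mono)
          fix \<omega> assume \<omega>: "\<omega> \<in> space M"
          have nn: "0 \<le> exp (\<nu>0 * s) * U s \<omega> powr \<theta>" "0 \<le> rho \<theta> * B" "0 \<le> V s \<omega>"
            using Vnn s0 \<omega> \<rho> Bpos by auto
          have "?gV s \<omega> \<le> ennreal (a0 * (exp (\<nu>0 * s) * U s \<omega> powr \<theta>) + (rho \<theta> * B) * V s \<omega>)"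
            using pw[OF \<omega>] by (rule ennreal_leI)
          also have "\<dots> = ennreal a0 * ennreal (exp (\<nu>0 * s) * U s \<omega> powr \<theta>) + ennreal (rho \<theta> * B) * ennreal (V s \<omega>)"
            using nn a0 by (simp add: ennreal_plus ennreal_mult)
          finally show "?gV s \<omega> * indicator A \<omega> \<le> ennreal a0 * (ennreal (exp (\<nu>0 * s) * U s \<omega> powr \<theta>) * indicator A \<omega>)
                  + ennreal (rho \<theta> * B) * (ennreal (V s \<omega>) * indicator A \<omega>)"
            by (auto split: split_indicator)
        qed
        also have "\<dots> = (\<integral>\<^sup>+\<omega>. ennreal a0 * (ennreal (exp (\<nu>0 * s) * U s \<omega> powr \<theta>) * indicator A \<omega>) \<partial>M)
                  + (\<integral>\<^sup>+\<omega>. ennreal (rho \<theta> * B) * (ennreal (V s \<omega>) * indicator A \<omega>) \<partial>M)"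
          by (rule nn_integral_add) measurable
        also have "\<dots> = ennreal a0 * P s + ennreal (rho \<theta> * B) * (\<integral>\<^sup>+\<omega>\<in>A. ennreal (V s \<omega>) \<partial>M)"
          unfolding P_def by (subst (1 2) nn_integral_cmult; (measurable | simp))
        finally have I1: "(\<integral>\<^sup>+\<omega>\<in>A. ?gV s \<omega> \<partial>M) \<le> ennreal a0 * P s + ennreal (rho \<theta> * B) * (\<integral>\<^sup>+\<omega>\<in>A. ennreal (V s \<omega>) \<partial>M)" .
        have I2: "(\<integral>\<^sup>+\<omega>\<in>A. ennreal (V s \<omega>) \<partial>M) \<le> X"
        proof -
          have As: "A \<in> sets (F s)" using A mono_F[OF t True] by auto
          have "(\<integral>\<^sup>+\<omega>\<in>A. ennreal (V s \<omega>) \<partial>M) = (\<integral>\<^sup>+\<omega>\<in>A. (\<integral>\<^sup>+r. indicator {s..} r * ?gV r \<omega> \<partial>lborel) \<partial>M)"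
            by (rule sol_intA[OF sV s0 As GmV[OF s0]])
          also have "\<dots> \<le> (\<integral>\<^sup>+\<omega>\<in>A. (\<integral>\<^sup>+r. indicator {t..} r * ?gV r \<omega> \<partial>lborel) \<partial>M)"
            using True by (intro nn_integral_mono) (auto split: split_indicator intro!: nn_integral_mono)
          also have "\<dots> = X"
            unfolding X_def by (rule sol_intA[OF sV t A GmV[OF t], symmetric])
          finally show ?thesis .
        qed
        have "(\<integral>\<^sup>+\<omega>\<in>A. ?gV s \<omega> \<partial>M) \<le> ennreal a0 * P s + ennreal (rho \<theta> * B) * X"
          using I1 I2 by (meson add_left_mono mult_left_mono order_trans zero_le)
        then show ?thesis using True by (simp add: B_def ac_simps)
      qed
      have m1: "(\<lambda>s. indicator {t..} s * P s) \<in> borel_measurable lborel"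
        unfolding P_def by (rule Fub2[OF mH AM])
      have "X = (\<integral>\<^sup>+s. indicator {t..} s * (\<integral>\<^sup>+\<omega>\<in>A. ?gV s \<omega> \<partial>M) \<partial>lborel)" by (rule X1)
      also have "\<dots> \<le> (\<integral>\<^sup>+s. ennreal a0 * (indicator {t..} s * P s) + X * (indicator {t..} s * ennreal (rho \<theta> * b0 * exp (\<nu> * (t - s)))) \<partial>lborel)"
        by (intro nn_integral_mono pt)
      also have "\<dots> = ennreal a0 * (\<integral>\<^sup>+s. indicator {t..} s * P s \<partial>lborel)
          + X * (\<integral>\<^sup>+s. indicator {t..} s * ennreal (rho \<theta> * b0 * exp (\<nu> * (t - s))) \<partial>lborel)"
      proof -
        have m2: "(\<lambda>s. indicator {t..} s * ennreal (rho \<theta> * b0 * exp (\<nu> * (t - s)))) \<in> borel_measurable lborel"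
          by measurable
        have m1': "(\<lambda>s. ennreal a0 * (indicator {t..} s * P s)) \<in> borel_measurable lborel"
          by (rule borel_measurable_times_ennreal[OF borel_measurable_const m1])
        have m2': "(\<lambda>s. X * (indicator {t..} s * ennreal (rho \<theta> * b0 * exp (\<nu> * (t - s))))) \<in> borel_measurable lborel"
          by (rule borel_measurable_times_ennreal[OF borel_measurable_const m2])
        show ?thesis
          unfolding nn_integral_add[OF m1' m2'] nn_integral_cmult[OF m1] nn_integral_cmult[OF m2] ..
      qed
      finally have E3: "X \<le> ennreal a0 * (\<integral>\<^sup>+s. indicator {t..} s * P s \<partial>lborel)
          + X * (\<integral>\<^sup>+s. indicator {t..} s * ennreal (rho \<theta> * b0 * exp (\<nu> * (t - s))) \<partial>lborel)" .
      have E2: "(\<integral>\<^sup>+s. indicator {t..} s * ennreal (rho \<theta> * b0 * exp (\<nu> * (t - s))) \<partial>lborel) = ennreal (1/2)"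
      proof -
        have "(\<integral>\<^sup>+s. indicator {t..} s * ennreal (rho \<theta> * b0 * exp (\<nu> * (t - s))) \<partial>lborel)
            = (\<integral>\<^sup>+s. ennreal (rho \<theta> * b0) * (indicator {t..} s * ennreal (exp (\<nu> * (t - s)))) \<partial>lborel)"
          using \<rho> b0 by (intro nn_integral_cong) (simp add: ennreal_mult ac_simps)
        also have "\<dots> = ennreal (rho \<theta> * b0) * ennreal (1/\<nu>)"
        proof -
          have m3: "(\<lambda>s. indicator {t..} s * ennreal (exp (\<nu> * (t - s)))) \<in> borel_measurable lborel"
            by measurable
          show ?thesis unfolding nn_integral_cmult[OF m3] exp_int[OF nupos] ..
        qed
        also have "\<dots> = ennreal (1/2)"
          using \<rho> b0 nupos by (simp add: ennreal_mult[symmetric] b0_def)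
        finally show ?thesis .
      qed
      have E1: "(\<integral>\<^sup>+s. indicator {t..} s * P s \<partial>lborel) \<le> ennreal (exp (\<nu>0 * t) * K1 / k2) * (\<integral>\<^sup>+\<omega>\<in>A. ?J \<omega> \<partial>M)"
      proof -
        interpret S: sigma_finite_subalgebra M "F t" using sfs[OF t] .
        have "(\<integral>\<^sup>+s. indicator {t..} s * P s \<partial>lborel) = (\<integral>\<^sup>+\<omega>\<in>A. ?H \<omega> \<partial>M)"
          unfolding P_def by (rule Fub[OF mH AM, symmetric])
        also have "\<dots> = (\<integral>\<^sup>+\<omega>. indicator A \<omega> * ?H \<omega> \<partial>M)" by (simp add: mult.commute)
        also have "\<dots> = (\<integral>\<^sup>+\<omega>. indicator A \<omega> * ?Jn \<omega> \<partial>M)"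
          unfolding Jproc_def by (rule S.nn_cond_exp_intg[symmetric]) (use A GmH in auto)
        also have "\<dots> \<le> (\<integral>\<^sup>+\<omega>. indicator A \<omega> * (ennreal (exp (\<nu>0 * t) * K1 / k2) * ?J \<omega>) \<partial>M)"
        proof (intro nn_integral_mono_AE)
          note A1 = so1[rule_format, OF t]
          note A2 = so2[rule_format, OF t]
          from A1 A2 show "AE \<omega> in M. indicator A \<omega> * ?Jn \<omega> \<le> indicator A \<omega> * (ennreal (exp (\<nu>0 * t) * K1 / k2) * ?J \<omega>)"
          proof eventually_elim
            case (elim \<omega>)
            have "?Jn \<omega> \<le> ennreal (exp (\<nu>0 * t) * K1 / k2) * ?J \<omega>"
              by (rule chain_ineq[OF k2(1) _ _ _ conjunct1[OF elim(2)] conjunct2[OF elim(1)]]) (use k1 in auto)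
            then show ?case by (intro mult_left_mono) auto
          qed
        qed
        also have "\<dots> = ennreal (exp (\<nu>0 * t) * K1 / k2) * (\<integral>\<^sup>+\<omega>\<in>A. ?J \<omega> \<partial>M)"
          by (subst nn_integral_cmult[symmetric]) (measurable, simp add: ac_simps)
        finally show ?thesis .
      qed
      have "X \<le> ennreal a0 * (ennreal (exp (\<nu>0 * t) * K1 / k2) * (\<integral>\<^sup>+\<omega>\<in>A. ?J \<omega> \<partial>M)) + X * ennreal (1/2)"
      proof -
        have "ennreal a0 * (\<integral>\<^sup>+s. indicator {t..} s * P s \<partial>lborel) \<le> ennreal a0 * (ennreal (exp (\<nu>0 * t) * K1 / k2) * (\<integral>\<^sup>+\<omega>\<in>A. ?J \<omega> \<partial>M))"
          by (rule mult_left_mono[OF E1]) simp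
        then have "ennreal a0 * (\<integral>\<^sup>+s. indicator {t..} s * P s \<partial>lborel) + X * ennreal (1/2) \<le> ennreal a0 * (ennreal (exp (\<nu>0 * t) * K1 / k2) * (\<integral>\<^sup>+\<omega>\<in>A. ?J \<omega> \<partial>M)) + X * ennreal (1/2)"
          by (rule add_right_mono)
        with E3[unfolded E2] show ?thesis by (rule order_trans)
      qed
      then have "X \<le> ennreal 2 * (ennreal a0 * (ennreal (exp (\<nu>0 * t) * K1 / k2) * (\<integral>\<^sup>+\<omega>\<in>A. ?J \<omega> \<partial>M)))"
        by (rule half_lemma[OF Xfin])
      also have "\<dots> = ennreal C * (\<integral>\<^sup>+\<omega>\<in>A. ?J \<omega> \<partial>M)"
      proof -
        define q where "q = exp (\<nu>0 * t) * K1 / k2"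
        have q: "0 \<le> q" using k1 k2 by (simp add: q_def)
        have eC: "2 * a0 * q = C"
        proof -
          have "exp (- \<nu>0 * t) * exp (\<nu>0 * t) = 1" by (simp add: exp_add[symmetric])
          then show ?thesis unfolding a0_def C_def q_def by (simp add: field_simps)
        qed
        have "ennreal (2 * a0 * q) = ennreal 2 * ennreal a0 * ennreal q"
          using a0 q by (simp add: ennreal_mult)
        then have "ennreal 2 * (ennreal a0 * (ennreal q * Y)) = ennreal C * Y" for Y
          unfolding eC by (metis mult.assoc)
        then show ?thesis unfolding q_def .
      qed
      also have "\<dots> = (\<integral>\<^sup>+\<omega>\<in>A. ennreal C * ?J \<omega> \<partial>M)"
        by (subst nn_integral_cmult[symmetric]) (measurable, simp add: ac_simps)
      finally show ?thesis unfolding X_def .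
    qed
    have [measurable]: "V t \<in> borel_measurable (F t)" using slice_meas[OF pV t] by auto
    show "AE \<omega> in M. ennreal (V t \<omega>) \<le> ennreal C * ?J \<omega>"
      by (rule int_le_AE[OF subalg[OF t]]) (use key fin in auto)
  qed
qed
end

theorem proposition7p5:
  fixes M :: "'a measure" and F :: "real \<Rightarrow> 'a measure"
    and \<theta> c\<^sub>1 c\<^sub>2 :: real and U W :: "real \<Rightarrow> 'a \<Rightarrow> real"
  assumes "filtered_prob_space M F"
    and "\<theta> > 1"
    and "P_pplus M F U"
    and "SO_plus M F (\<lambda>t \<omega>. U t \<omega> powr \<theta>)"
    and "is_solution M F (h_EZ \<theta>) U W"
    and "0 < c\<^sub>1" and "c\<^sub>1 \<le> c\<^sub>2"
    and "\<forall>t\<ge>0. AE \<omega> in M.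
           ennreal c\<^sub>1 * Jproc M F (\<lambda>s \<omega>. U s \<omega> powr \<theta>) t \<omega> \<le> ennreal (W t \<omega>)
         \<and> ennreal (W t \<omega>) \<le> ennreal c\<^sub>2 * Jproc M F (\<lambda>s \<omega>. U s \<omega> powr \<theta>) t \<omega>"
  shows "is_maximal_solution M F (h_EZ \<theta>) U W"
proof -
  interpret fps M F using assms(1) by (rule fps.intro)
  obtain \<nu>0 where nu: "0 < \<nu>0" and SN: "SO_nu M F \<nu>0 (\<lambda>t \<omega>. U t \<omega> powr \<theta>)"
    using assms(4) unfolding SO_plus_def by blast
  have SO1: "SO M F (\<lambda>t \<omega>. U t \<omega> powr \<theta>)" and SO2: "SO M F (\<lambda>t \<omega>. exp (\<nu>0 * t) * U t \<omega> powr \<theta>)"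
    using SN unfolding SO_nu_def by auto
  have \<rho>: "0 < rho \<theta>" "rho \<theta> < 1" using assms(2) by (auto simp: rho_def)
  have Wnn: "\<forall>s\<ge>0. \<forall>\<omega>\<in>space M. 0 \<le> W s \<omega>"
    using assms(5) by (auto simp: is_solution_def P_plus_def)
  show ?thesis
    unfolding is_maximal_solution_def
  proof (intro conjI allI impI assms(5))
    fix W' :: "real \<Rightarrow> 'a \<Rightarrow> real" and t :: real
    assume sW': "is_solution M F (h_EZ \<theta>) U W'" and t: "0 \<le> t"
    obtain C where C: "0 < C" and bd: "\<forall>t\<ge>0. AE \<omega> in M. ennreal (W' t \<omega>) \<le> ennreal C * Jproc M F (\<lambda>s \<omega>. U s \<omega> powr \<theta>) t \<omega>"
      using boundA[OF assms(2) assms(3) nu SO1 SO2 sW'] by blast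
    define \<mu> where "\<mu> = max 1 (C / c\<^sub>1)"
    have mu: "1 \<le> \<mu>" "C / c\<^sub>1 \<le> \<mu>" by (auto simp: \<mu>_def)
    have le0: "\<forall>s\<ge>0. AE \<omega> in M. W' s \<omega> \<le> \<mu> * W s \<omega>"
    proof (intro allI impI)
      fix s :: real assume s: "0 \<le> s"
      note B1 = bd[rule_format, OF s]
      note B2 = assms(8)[rule_format, OF s]
      from AE_space B1 B2 show "AE \<omega> in M. W' s \<omega> \<le> \<mu> * W s \<omega>"
      proof (eventually_elim)
        case (elim \<omega>)
        have w: "0 \<le> W s \<omega>" using Wnn s elim by auto
        have cc: "0 \<le> C / c\<^sub>1" using C assms(6) by simp
        have "ennreal (W' s \<omega>) \<le> ennreal C * Jproc M F (\<lambda>s \<omega>. U s \<omega> powr \<theta>) s \<omega>" by (rule elim(2))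
        also have "ennreal C = ennreal (C / c\<^sub>1) * ennreal c\<^sub>1"
          using assms(6) C by (simp add: ennreal_mult[symmetric])
        also have "ennreal (C / c\<^sub>1) * ennreal c\<^sub>1 * Jproc M F (\<lambda>s \<omega>. U s \<omega> powr \<theta>) s \<omega>
            \<le> ennreal (C / c\<^sub>1) * ennreal (W s \<omega>)"
          unfolding mult.assoc by (rule mult_left_mono) (use elim(3) in auto)
        also have "\<dots> = ennreal (C / c\<^sub>1 * W s \<omega>)" using cc w by (rule ennreal_mult[symmetric])
        finally have "ennreal (W' s \<omega>) \<le> ennreal (C / c\<^sub>1 * W s \<omega>)" .
        moreover have cw: "0 \<le> C / c\<^sub>1 * W s \<omega>" using cc w by (rule mult_nonneg_nonneg)
        ultimately have "W' s \<omega> \<le> C / c\<^sub>1 * W s \<omega>" using ennreal_le_iff[OF cw] by blast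
        also have "\<dots> \<le> \<mu> * W s \<omega>" using mu w by (intro mult_right_mono) auto
        finally show ?case .
      qed
    qed
    have iter: "\<forall>s\<ge>0. AE \<omega> in M. W' s \<omega> \<le> \<mu> powr (rho \<theta> ^ n) * W s \<omega>" for n
    proof (induction n)
      case 0
      then show ?case using le0 mu by simp
    next
      case (Suc n)
      have "\<forall>s\<ge>0. AE \<omega> in M. W' s \<omega> \<le> (\<mu> powr (rho \<theta> ^ n)) powr rho \<theta> * W s \<omega>"
        using iter_step[OF assms(2) assms(3) sW' assms(5) _ Suc.IH] by auto
      moreover have "(\<mu> powr (rho \<theta> ^ n)) powr rho \<theta> = \<mu> powr (rho \<theta> ^ Suc n)"
        by (simp add: powr_powr mult.commute)
      ultimately show ?case by simp
    qed
    have "AE \<omega> in M. \<forall>n. W' t \<omega> \<le> \<mu> powr (rho \<theta> ^ n) * W t \<omega>"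
      using iter t by (subst AE_all_countable) auto
    then show "AE \<omega> in M. W' t \<omega> \<le> W t \<omega>"
    proof (rule AE_mp, intro AE_I2 impI)
      fix \<omega> assume all: "\<forall>n. W' t \<omega> \<le> \<mu> powr (rho \<theta> ^ n) * W t \<omega>"
      have "(\<lambda>n. rho \<theta> ^ n) \<longlonglongrightarrow> 0" using \<rho> by (intro LIMSEQ_power_zero) auto
      then have "(\<lambda>n. \<mu> powr (rho \<theta> ^ n)) \<longlonglongrightarrow> \<mu> powr 0"
        using mu by (intro tendsto_powr tendsto_const) auto
      then have lim: "(\<lambda>n. \<mu> powr (rho \<theta> ^ n) * W t \<omega>) \<longlonglongrightarrow> 1 * W t \<omega>"
        using mu by (intro tendsto_mult_right) auto
      show "W' t \<omega> \<le> W t \<omega>"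
        using LIMSEQ_le_const[OF lim, of "W' t \<omega>"] all by auto
    qed
  qed
qed
end
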